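(* Let $n\ge k\ge 2$ be integers. Then \[ \mathsf{opt}_{\operatorname{bandit}}^{\operatorname{det}}(n,k)\le k\ln(n/k)+k-1. \]
   Context: Prediction with expert advice in the realizable case: $\mathcal{Y}=\{1,\dots,k\}$, $\mathcal{X}=[k]^n$, experts $h_i(x)=x_i$, $i=1,\dots,n$. $\mathcal{P}_0$ is the set of finite sequences of examples in $\mathcal{X}\times\mathcal{Y}$ consistent with some $h_i$ (no errors). Bandit feedback: each round the adversary presents $x_t$, a deterministic learner predicts $\hat y_t$ as a function of past observations and $x_t$, and learns only whether $\hat y_t$ equals the true label $y_t$. $\mathsf{opt}_{\operatorname{bandit}}^{\operatorname{det}}(n,k)$ is the infimum over deterministic learners of the supremum over $S\in\mathcal{P}_0$ of the number of mistakes ($\hat y_t\ne y_t$). *)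

theory Defs
  imports Complex_Main "HOL-Library.Extended_Nat"
begin

text \<open>Instance space X = [k]^n: lists of length n with entries in {1..k}.
  Coordinate i (1 \<le> i \<le> n) of x is  x ! (i - 1).  Labels Y = {1..k}.\<close>

definition inst_space :: "nat \<Rightarrow> nat \<Rightarrow> nat list set" where
  "inst_space n k = {x. length x = n \<and> (\<forall>v\<in>set x. v \<in> {1..k})}"

definition expert :: "nat \<Rightarrow> nat list \<Rightarrow> nat" where
  "expert i x = x ! (i - 1)"

definition realizable_seqs :: "nat \<Rightarrow> nat \<Rightarrow> (nat list \<times> nat) list set" where
  "realizable_seqs n k = {S. (\<forall>(x, y)\<in>set S. x \<in> inst_space n k \<and> y \<in> {1..k}) \<and>
      (\<exists>i\<in>{1..n}. \<forall>(x, y)\<in>set S. y = expert i x)}"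

text \<open>A deterministic bandit learner maps the history of past observations
  (instance, own prediction, whether it was correct) and the current instance
  to a prediction in Y.\<close>
type_synonym learner = "(nat list \<times> nat \<times> bool) list \<Rightarrow> nat list \<Rightarrow> nat"

definition bandit_learners :: "nat \<Rightarrow> learner set" where
  "bandit_learners k = {L. \<forall>h x. L h x \<in> {1..k}}"

fun mistakes :: "learner \<Rightarrow> (nat list \<times> nat \<times> bool) list \<Rightarrow> (nat list \<times> nat) list \<Rightarrow> nat" where
  "mistakes L hist [] = 0"
| "mistakes L hist ((x, y) # S) =
     (let p = L hist x in (if p \<noteq> y then 1 else 0) + mistakes L (hist @ [(x, p, p = y)]) S)"

definition opt_bandit_det :: "nat \<Rightarrow> nat \<Rightarrow> enat" where
  "opt_bandit_det n k =
     (INF L\<in>bandit_learners k. SUP S\<in>realizable_seqs n k. enat (mistakes L [] S))"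

end

theory Submission
  imports Defs
begin

definition vs :: "nat \<Rightarrow> (nat list \<times> nat \<times> bool) list \<Rightarrow> nat set" where
  "vs n h = {i\<in>{1..n}. \<forall>(x,p,b)\<in>set h. (x!(i-1) = p) = b}"

definition cnt :: "nat set \<Rightarrow> nat list \<Rightarrow> nat \<Rightarrow> nat" where
  "cnt V x y = card {i\<in>V. x!(i-1) = y}"

definition lrn :: "nat \<Rightarrow> nat \<Rightarrow> learner" where
  "lrn n k h x = (SOME y. y \<in> {1..k} \<and> (\<forall>z\<in>{1..k}. cnt (vs n h) x z \<le> cnt (vs n h) x y))"

definition phi :: "nat \<Rightarrow> nat \<Rightarrow> real" where
  "phi k v = (if v \<le> k then real v - 1 else real k * ln (real v / real k) + real k - 1)"

lemma ex_max:
  fixes f :: "nat \<Rightarrow> nat"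
  assumes "1 \<le> k"
  shows "\<exists>y. y \<in> {1..k} \<and> (\<forall>z\<in>{1..k}. f z \<le> f y)"
proof -
  have ne: "f ` {1..k} \<noteq> {}" using assms by auto
  obtain y where y: "y \<in> {1..k}" "f y = Max (f ` {1..k})"
    using Max_in[OF _ ne] by force
  then show ?thesis by auto
qed

lemma lrn_spec:
  assumes "1 \<le> k"
  shows "lrn n k h x \<in> {1..k} \<and> (\<forall>z\<in>{1..k}. cnt (vs n h) x z \<le> cnt (vs n h) x (lrn n k h x))"
  unfolding lrn_def by (rule someI_ex[OF ex_max[OF assms]])

lemma vs_snoc: "vs n (h @ [(x,p,b)]) = {i\<in>vs n h. (x!(i-1) = p) = b}"
  unfolding vs_def by auto

lemma vs_sub: "vs n h \<subseteq> {1..n}" unfolding vs_def by auto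

lemma card_sum:
  assumes "V \<subseteq> {1..n}" "x \<in> inst_space n k"
  shows "card V = (\<Sum>z\<in>{1..k}. cnt V x z)"
proof -
  have fin: "finite V" using assms(1) finite_subset by blast
  have X: "x!(i-1) \<in> {1..k}" if "i \<in> V" for i
  proof -
    have "i \<in> {1..n}" using assms(1) that by blast
    then have "i - 1 < length x" using assms(2) unfolding inst_space_def by auto
    then have "x!(i-1) \<in> set x" by simp
    then show ?thesis using assms(2) unfolding inst_space_def by auto
  qed
  have "V = (\<Union>z\<in>{1..k}. {i\<in>V. x!(i-1) = z})"
    using X by blast
  then have "card V = card (\<Union>z\<in>{1..k}. {i\<in>V. x!(i-1) = z})" by simp
  also have "\<dots> = (\<Sum>z\<in>{1..k}. card {i\<in>V. x!(i-1) = z})"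
    by (rule card_UN_disjoint) (use fin in auto)
  finally show ?thesis unfolding cnt_def by simp
qed

lemma ln_bound: "0 < (x::real) \<Longrightarrow> 1 - 1/x \<le> ln x"
  using ln_le_minus_one[of "1/x"] by (simp add: ln_div)

lemma phi_mono: "1 \<le> k \<Longrightarrow> v \<le> w \<Longrightarrow> phi k v \<le> phi k w"
proof -
  assume k: "1 \<le> k" and vw: "v \<le> w"
  show ?thesis
  proof (cases "w \<le> k")
    case True then show ?thesis using vw by (simp add: phi_def)
  next
    case False
    then have w: "k < w" by simp
    have "ln (real w / real k) \<ge> 0" using w k by simp
    then have A: "real k * ln (real w / real k) \<ge> 0" by simp
    show ?thesis
    proof (cases "v \<le> k")
      case True then show ?thesis using A w by (simp add: phi_def)
    next
      case False
      then have "ln (real v / real k) \<le> ln (real w / real k)"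
        using vw k by (simp add: divide_right_mono)
      then show ?thesis using False w by (simp add: phi_def mult_left_mono)
    qed
  qed
qed

lemma phi_step:
  fixes v c k :: nat
  assumes k: "2 \<le> k" and c: "v \<le> k * c" and c1: "1 \<le> c" and v1: "1 \<le> v - c" and cv: "c \<le> v"
  shows "1 + phi k (v - c) \<le> phi k v"
proof (cases "v \<le> k")
  case True then show ?thesis using c1 cv by (simp add: phi_def of_nat_diff)
next
  case False
  then have vk: "k < v" by simp
  have lb: "real c / real v \<le> ln (real v / real (v - c))"
  proof -
    have "0 < real v / real (v - c)" using v1 vk by simp
    from ln_bound[OF this] have "1 - real (v-c) / real v \<le> ln (real v / real (v - c))" by simp
    moreover have "1 - real (v-c) / real v = real c / real v" using vk cv
      by (simp add: of_nat_diff field_simps)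
    ultimately show ?thesis by simp
  qed
  have ck: "1 \<le> real k * (real c / real v)" using c vk
    by (simp add: field_simps) (metis of_nat_le_iff of_nat_mult)
  have kl: "1 \<le> real k * ln (real v / real (v - c))"
    using mult_left_mono[OF lb, of "real k"] ck by simp
  show ?thesis
  proof (cases "v - c \<le> k")
    case True
    show ?thesis
    proof (cases "v - c < k")
      case True
      have "0 \<le> ln (real v / real k)" using vk k by (intro ln_ge_zero) simp
      then have "0 \<le> real k * ln (real v / real k)" by simp
      moreover have "real (v - c) \<le> real k - 1" using True by linarith
      moreover have "phi k v = real k * ln (real v / real k) + real k - 1" using vk by (simp add: phi_def)
      moreover have "phi k (v - c) = real (v - c) - 1" using True by (simp add: phi_def)
      ultimately show ?thesis by linarith
    next
      case False
      then have "v - c = k" using \<open>v - c \<le> k\<close> by simp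
      then show ?thesis using kl vk by (simp add: phi_def)
    qed
  next
    case False
    have eq: "ln (real v / real k) = ln (real v / real (v - c)) + ln (real (v - c) / real k)"
      using False vk k by (simp add: ln_div)
    show ?thesis using False vk kl by (simp add: phi_def eq algebra_simps)
  qed
qed

lemma main:
  assumes k: "2 \<le> k"
    and i0: "i0 \<in> vs n h"
    and S: "\<forall>(x,y)\<in>set S. x \<in> inst_space n k \<and> y = expert i0 x"
  shows "real (mistakes (lrn n k) h S) \<le> phi k (card (vs n h))"
  using i0 S
proof (induction S arbitrary: h)
  case Nil
  have "finite (vs n h)" by (rule finite_subset[OF vs_sub]) simp
  then have "card (vs n h) \<ge> 1" using Nil.prems(1) by (metis One_nat_def Suc_leI card_gt_0_iff empty_iff)
  show ?case
  proof (cases "card (vs n h) \<le> k")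
    case True then show ?thesis using \<open>card (vs n h) \<ge> 1\<close> by (simp add: phi_def)
  next
    case False
    have "0 \<le> ln (real (card (vs n h)) / real k)"
      using k False by (intro ln_ge_zero) simp
    then have "0 \<le> real k * ln (real (card (vs n h)) / real k)" by simp
    moreover have "phi k (card (vs n h)) = real k * ln (real (card (vs n h)) / real k) + real k - 1"
      using False by (simp add: phi_def)
    ultimately show ?thesis using k by simp
  qed
next
  case (Cons a S)
  obtain x y where a: "a = (x,y)" by fastforce
  define p where "p = lrn n k h x"
  have k1: "1 \<le> k" using k by simp
  have fin: "finite (vs n h)" by (rule finite_subset[OF vs_sub]) simp
  have xin: "x \<in> inst_space n k" and y: "y = x!(i0-1)"
    using Cons.prems(2) a by (auto simp: expert_def)
  define h' where "h' = h @ [(x, p, p = y)]"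
  have i0': "i0 \<in> vs n h'" using Cons.prems(1) y unfolding h'_def vs_snoc by auto
  have S': "\<forall>(x,y)\<in>set S. x \<in> inst_space n k \<and> y = expert i0 x" using Cons.prems(2) by auto
  have IH: "real (mistakes (lrn n k) h' S) \<le> phi k (card (vs n h'))"
    using Cons.IH[OF i0' S'] .
  have m: "mistakes (lrn n k) h (a # S) = (if p \<noteq> y then 1 else 0) + mistakes (lrn n k) h' S"
    unfolding a h'_def p_def by (simp add: Let_def)
  show ?case
  proof (cases "p = y")
    case True
    have "vs n h' \<subseteq> vs n h" unfolding h'_def vs_snoc by auto
    then have "card (vs n h') \<le> card (vs n h)" by (rule card_mono[OF fin])
    then have "phi k (card (vs n h')) \<le> phi k (card (vs n h))" by (rule phi_mono[OF k1])
    moreover have "mistakes (lrn n k) h (a # S) = mistakes (lrn n k) h' S" using m True by simp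
    ultimately show ?thesis using IH by linarith
  next
    case False
    define V where "V = vs n h"
    define c where "c = cnt V x p"
    have sp: "p \<in> {1..k}" "\<forall>z\<in>{1..k}. cnt V x z \<le> c"
      using lrn_spec[OF k1, of n h x] unfolding p_def c_def V_def by auto
    have "card V = (\<Sum>z\<in>{1..k}. cnt V x z)" using card_sum[OF vs_sub xin] V_def by simp
    also have "\<dots> \<le> k * c" using sum_bounded_above[of "{1..k}" "\<lambda>z. cnt V x z" c] sp by simp
    finally have vc: "card V \<le> k * c" .
    have vsh': "vs n h' = V - {i\<in>V. x!(i-1) = p}" unfolding h'_def vs_snoc V_def using False by auto
    have cV: "c \<le> card V" unfolding c_def cnt_def V_def using fin by (simp add: card_mono)
    have cd: "card (vs n h') = card V - c" unfolding vsh' c_def cnt_def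
      using fin V_def by (simp add: card_Diff_subset)
    have pos: "1 \<le> card V - c"
    proof -
      have "finite (vs n h')" by (rule finite_subset[OF vs_sub]) simp
      then have "card (vs n h') \<ge> 1" using i0' by (metis One_nat_def Suc_leI card_gt_0_iff empty_iff)
      then show ?thesis using cd by simp
    qed
    have c1: "1 \<le> c"
    proof -
      have "i0 \<in> {i\<in>V. x!(i-1) = y}" using Cons.prems(1) y V_def by simp
      then have "{i\<in>V. x!(i-1) = y} \<noteq> {}" by blast
      moreover have "finite {i\<in>V. x!(i-1) = y}" using fin V_def by simp
      ultimately have "1 \<le> cnt V x y" unfolding cnt_def
        by (simp add: Suc_le_eq card_gt_0_iff)
      moreover have "y \<in> {1..k}"
      proof -
        have "i0 - 1 < length x" using Cons.prems(1) xin unfolding vs_def inst_space_def by auto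
        then have "x!(i0-1) \<in> set x" by simp
        then show ?thesis using xin y unfolding inst_space_def by auto
      qed
      ultimately show ?thesis using sp(2) le_trans by blast
    qed
    have st: "1 + phi k (card V - c) \<le> phi k (card V)"
      using phi_step[OF k vc c1 pos cV] .
    have "mistakes (lrn n k) h (a # S) = 1 + mistakes (lrn n k) h' S" using m False by simp
    then show ?thesis using IH cd st V_def by simp
  qed
qed

theorem corollary4p4:
  fixes n k :: nat
  assumes "2 \<le> k" and "k \<le> n"
  shows "\<exists>m. opt_bandit_det n k = enat m \<and>
           real m \<le> real k * ln (real n / real k) + real k - 1"
proof -
  define B where "B = real k * ln (real n / real k) + real k - 1"
  define M where "M = nat (floor B)"
  have k1: "1 \<le> k" using assms by simp
  have Lin: "lrn n k \<in> bandit_learners k" unfolding bandit_learners_def using lrn_spec[OF k1] by blast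
  have vs0: "vs n [] = {1..n}" unfolding vs_def by auto
  have "0 \<le> ln (real n / real k)" using assms by (intro ln_ge_zero) simp
  then have "0 \<le> real k * ln (real n / real k)" by simp
  have phin: "phi k n = B"
  proof (cases "n \<le> k")
    case True then have "n = k" using assms by simp
    then show ?thesis unfolding phi_def B_def by simp
  next
    case False then show ?thesis unfolding phi_def B_def by simp
  qed
  have "(0::real) \<le> real k - 1" using assms by simp
  then have Bnn: "0 \<le> B" using \<open>0 \<le> real k * ln (real n / real k)\<close> unfolding B_def by (simp only: add_diff_eq[symmetric] add_nonneg_nonneg)
  have each: "mistakes (lrn n k) [] S \<le> M" if SR: "S \<in> realizable_seqs n k" for S
  proof -
    obtain i0 where i0: "i0 \<in> {1..n}" "\<forall>(x, y)\<in>set S. y = expert i0 x"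
      using SR unfolding realizable_seqs_def by blast
    have S: "\<forall>(x,y)\<in>set S. x \<in> inst_space n k \<and> y = expert i0 x"
      using SR i0(2) unfolding realizable_seqs_def by auto
    have "real (mistakes (lrn n k) [] S) \<le> B"
      using main[OF assms(1) _ S, of "[]"] i0(1) vs0 phin by simp
    then have "int (mistakes (lrn n k) [] S) \<le> floor B" by linarith
    then show ?thesis unfolding M_def by linarith
  qed
  have "opt_bandit_det n k \<le> (SUP S\<in>realizable_seqs n k. enat (mistakes (lrn n k) [] S))"
    unfolding opt_bandit_det_def using Lin by (rule INF_lower)
  also have "\<dots> \<le> enat M" using each by (auto intro!: SUP_least)
  finally have le: "opt_bandit_det n k \<le> enat M" .
  then obtain m where m: "opt_bandit_det n k = enat m" "m \<le> M"
    using enat_ile by (metis enat_ord_simps(1))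
  have "real M \<le> B" unfolding M_def using Bnn by linarith
  then show ?thesis using m B_def by auto
qed

end
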